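(* Let $n,t,k$ be integers with $n\geq 2t\geq 2$ and $k\geq 2$. Then \[C_k(n,t)\leq k^t A_k(n-2t,0^t),\] where $0^t$ denotes the word consisting of $t$ zeros.
   Context: Words are over $\Sigma_k=\{0,1,\ldots,k-1\}$. A border of a word $w$ is a non-empty word that is both a proper prefix and a proper suffix of $w$. A word $w$ is closed by a word $u$ if $u$ is a border of $w$ and $u$ occurs exactly twice in $w$ as a factor (overlapping occurrences counted). $C_k(n,t)$ denotes the number of words of length $n$ over $\Sigma_k$ that are closed by some word of length $t$. $A_k(m,v)$ denotes the number of words of length $m$ over $\Sigma_k$ that do not contain $v$ as a factor (for $m=0$ the empty word is counted). *)

theory Defs
  imports Main "HOL-Library.Sublist"
begin

definition words :: "nat \<Rightarrow> nat \<Rightarrow> nat list set" where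
  "words k n = {w. length w = n \<and> set w \<subseteq> {..<k}}"

(* number of occurrences of u as a factor of w (overlapping occurrences counted) *)
definition occ :: "nat list \<Rightarrow> nat list \<Rightarrow> nat" where
  "occ u w = card {i. i + length u \<le> length w \<and> take (length u) (drop i w) = u}"

definition is_border :: "nat list \<Rightarrow> nat list \<Rightarrow> bool" where
  "is_border u w \<longleftrightarrow> u \<noteq> [] \<and> length u < length w \<and> prefix u w \<and> suffix u w"

definition closed_by :: "nat list \<Rightarrow> nat list \<Rightarrow> bool" where
  "closed_by w u \<longleftrightarrow> is_border u w \<and> occ u w = 2"

definition C :: "nat \<Rightarrow> nat \<Rightarrow> nat \<Rightarrow> nat" where
  "C k n t = card {w \<in> words k n. \<exists>u. length u = t \<and> closed_by w u}"

definition A :: "nat \<Rightarrow> nat \<Rightarrow> nat list \<Rightarrow> nat" where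
  "A k m v = card {w \<in> words k m. \<not> sublist v w}"

end

theory Submission
  imports Defs
begin

lemma finite_words: "finite (words k n)"
proof -
  have "words k n = {xs. set xs \<subseteq> {..<k} \<and> length xs = n}" unfolding words_def by auto
  then show ?thesis using finite_lists_length_eq[of "{..<k}" n] by simp
qed

lemma card_words: "card (words k n) = k ^ n"
proof -
  have "words k n = {xs. set xs \<subseteq> {..<k} \<and> length xs = n}" unfolding words_def by auto
  then show ?thesis using card_lists_length_eq[of "{..<k}" n] by simp
qed

lemma decomp:
  assumes "length u = t" "t \<le> length w" "\<not> sublist u w"
  shows "\<exists>l<t. \<exists>x c. w = x @ [c] @ drop (t - l) u \<and> c \<noteq> u ! (t - Suc l)"
proof -
  define S where "S = {l. l < t \<and> suffix (drop (t - l) u) w}"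
  have fin: "finite S" unfolding S_def by auto
  have "0 \<in> S" unfolding S_def using assms by (cases t) auto
  define l where "l = Max S"
  have lS: "l \<in> S" unfolding l_def using fin \<open>0 \<in> S\<close> Max_in by blast
  have lmax: "\<And>j. j \<in> S \<Longrightarrow> j \<le> l" unfolding l_def using fin Max_ge by blast
  from lS have lt: "l < t" and suf: "suffix (drop (t - l) u) w" unfolding S_def by auto
  obtain p where p: "w = p @ drop (t - l) u" using suf unfolding suffix_def by blast
  have "length (drop (t - l) u) = l" using lt assms by simp
  then have "p \<noteq> []" using p lt assms by auto
  then obtain x c where xc: "p = x @ [c]" by (metis rev_exhaust)
  have "c \<noteq> u ! (t - Suc l)"
  proof
    assume ceq: "c = u ! (t - Suc l)"
    have tk: "drop (t - Suc l) u = u ! (t - Suc l) # drop (t - l) u" 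
    proof -
      have a: "t - Suc l < length u" using lt assms by simp
      have b: "Suc (t - Suc l) = t - l" using lt by simp
      show ?thesis using Cons_nth_drop_Suc[OF a] b by simp
    qed
    have "suffix (drop (t - Suc l) u) w" unfolding suffix_def using p xc ceq tk by auto
    show False
    proof (cases "Suc l < t")
      case True
      then have "Suc l \<in> S" unfolding S_def using \<open>suffix (drop (t - Suc l) u) w\<close> by auto
      then show False using lmax by fastforce
    next
      case False
      then have "Suc l = t" using lt by auto
      then have "suffix u w" using \<open>suffix (drop (t - Suc l) u) w\<close> assms by simp
      then show False using assms(3) by (meson suffix_imp_sublist)
    qed
  qed
  then show ?thesis using p xc lt by auto
qed

lemma L1:
  assumes "length u = t" "t \<ge> 1" "set u \<subseteq> {..<k}" "t \<le> m"
  shows "A k m u \<le> (\<Sum>d\<in>{1..t}. (k-1) * A k (m-d) u)"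
proof -
  let ?Av = "\<lambda>m. {w \<in> words k m. \<not> sublist u w}"
  let ?B = "\<lambda>d. (\<lambda>(c,x). x @ [c] @ drop (t - (d-1)) u) ` (({..<k} - {u!(t-d)}) \<times> ?Av (m-d))"
  have sub: "?Av m \<subseteq> (\<Union>d\<in>{1..t}. ?B d)"
  proof
    fix w assume w: "w \<in> ?Av m"
    then have lw: "length w = m" and sw: "set w \<subseteq> {..<k}" and ns: "\<not> sublist u w"
      unfolding words_def by auto
    obtain l x c where l: "l < t" and wx: "w = x @ [c] @ drop (t - l) u" and cne: "c \<noteq> u ! (t - Suc l)"
      using decomp[OF assms(1) _ ns] lw assms(4) by blast
    have lx: "length x = m - Suc l" using wx lw l assms(1) by auto
    have sx: "set x \<subseteq> {..<k}" using sw wx by auto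
    have cin: "c \<in> {..<k}" using sw wx by auto
    have nx: "\<not> sublist u x" 
    proof
      assume "sublist u x"
      then have "sublist u (x @ ([c] @ drop (t - l) u))" using sublist_order.dual_order.trans by blast
      then show False using ns wx by simp
    qed
    have "(c, x) \<in> ({..<k} - {u!(t - Suc l)}) \<times> ?Av (m - Suc l)"
      using lx sx cin nx cne unfolding words_def by auto
    then have "w \<in> ?B (Suc l)" using wx by force
    moreover have "Suc l \<in> {1..t}" using l by auto
    ultimately show "w \<in> (\<Union>d\<in>{1..t}. ?B d)" by blast
  qed
  have finAv: "\<And>m. finite (?Av m)" using finite_words by auto
  have "A k m u = card (?Av m)" unfolding A_def by simp
  also have "\<dots> \<le> card (\<Union>d\<in>{1..t}. ?B d)"
    using sub by (intro card_mono) (auto intro!: finite_UN_I finite_imageI finite_cartesian_product finAv)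
  also have "\<dots> \<le> (\<Sum>d\<in>{1..t}. card (?B d))" by (rule card_UN_le) simp
  also have "\<dots> \<le> (\<Sum>d\<in>{1..t}. (k-1) * A k (m-d) u)"
  proof (rule sum_mono)
    fix d assume d: "d \<in> {1..t}"
    have "t - d < length u" using d assms(1) by auto
    then have "u ! (t-d) \<in> {..<k}" using assms(3) nth_mem by blast
    then have "card ({..<k} - {u!(t-d)}) = k - 1" by simp
    have "card (?B d) \<le> card (({..<k} - {u!(t-d)}) \<times> ?Av (m-d))" by (rule card_image_le) (auto intro: finAv)
    also have "\<dots> = (k-1) * A k (m-d) u"
      unfolding A_def card_cartesian_product using \<open>card ({..<k} - {u!(t-d)}) = k - 1\<close> by simp
    finally show "card (?B d) \<le> (k-1) * A k (m-d) u" .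
  qed
  finally show ?thesis .
qed

lemma rep_inj0:
  fixes c c' :: nat
  assumes "c \<noteq> 0" "c' \<noteq> 0" "replicate a 0 @ c # y = replicate b 0 @ c' # y'"
  shows "a = b \<and> c = c' \<and> y = y'"
  using assms
proof (induction a arbitrary: b)
  case 0
  then show ?case
  proof (cases b)
    case 0
    then show ?thesis using "0.prems" by simp
  next
    case (Suc b')
    then show ?thesis using "0.prems" by simp
  qed
next
  case (Suc a)
  then show ?case
  proof (cases b)
    case 0
    then show ?thesis using Suc.prems by simp
  next
    case (Suc b')
    have "replicate a 0 @ c # y = replicate b' 0 @ c' # y'" using Suc Suc.prems by simp
    then show ?thesis using Suc.IH[of b'] Suc.prems Suc by simp
  qed
qed

lemma rep_inj:
  fixes c c' :: nat
  assumes "c \<noteq> 0" "c' \<noteq> 0" "x @ [c] @ replicate a 0 = x' @ [c'] @ replicate b 0"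
  shows "a = b \<and> c = c' \<and> x = x'"
proof -
  have "rev (x @ [c] @ replicate a 0) = rev (x' @ [c'] @ replicate b 0)" using assms(3) by simp
  then have "replicate a 0 @ c # rev x = replicate b 0 @ c' # rev x'" by simp
  then show ?thesis using rep_inj0[OF assms(1,2)] by blast
qed

lemma nosub:
  fixes c :: nat
  assumes "c \<noteq> 0" "t \<ge> 1" "e < t" "\<not> sublist (replicate t 0) x"
  shows "\<not> sublist (replicate t 0) (x @ c # replicate e 0)"
proof
  assume "sublist (replicate t 0) (x @ c # replicate e 0)"
  then consider "sublist (replicate t 0) x" | "sublist (replicate t 0) (c # replicate e 0)"
    | xs1 xs2 where "replicate t (0::nat) = xs1 @ xs2" "suffix xs1 x" "prefix xs2 (c # replicate e 0)"
    unfolding sublist_append by blast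
  then show False
  proof cases
    case 1 then show ?thesis using assms by simp
  next
    case 2
    then consider "prefix (replicate t 0) (c # replicate e 0)" | "sublist (replicate t 0) (replicate e (0::nat))"
      unfolding sublist_Cons_right by blast
    then show ?thesis
    proof cases
      case 1
      obtain t' where "t = Suc t'" using assms(2) by (cases t) auto
      then show ?thesis using 1 assms(1) by simp
    next
      case 2
      then have "length (replicate t (0::nat)) \<le> length (replicate e (0::nat))" by (rule sublist_length_le)
      then show ?thesis using assms(3) by simp
    qed
  next
    case 3
    show ?thesis
    proof (cases xs2)
      case Nil
      then have "suffix (replicate t 0) x" using 3 by simp
      then show ?thesis using assms(4) by (meson suffix_imp_sublist)
    next
      case (Cons y ys)
      then have "y = c" using 3(3) by simp
      moreover have "y \<in> set (replicate t (0::nat))" using 3(1) Cons by simp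
      ultimately show ?thesis using assms(1) by simp
    qed
  qed
qed

lemma L2:
  assumes "t \<ge> 1" "t \<le> m"
  shows "(\<Sum>d\<in>{1..t}. (k-1) * A k (m-d) (replicate t 0)) \<le> A k m (replicate t 0)"
proof -
  let ?Z = "replicate t (0::nat)"
  let ?Av = "\<lambda>m. {w \<in> words k m. \<not> sublist ?Z w}"
  let ?T = "Sigma {1..t} (\<lambda>d. {1..<k} \<times> ?Av (m-d))"
  let ?g = "\<lambda>(d, c, x). x @ [c] @ replicate (d-1) (0::nat)"
  have finAv: "\<And>m. finite (?Av m)" using finite_words by auto
  have inj: "inj_on ?g ?T"
  proof (rule inj_onI)
    fix p q assume p: "p \<in> ?T" and q: "q \<in> ?T" and eq: "?g p = ?g q"
    obtain d c x where pd: "p = (d, c, x)" by (cases p) auto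
    obtain d' c' x' where qd: "q = (d', c', x')" by (cases q) auto
    have "c \<noteq> 0" "c' \<noteq> 0" "d \<ge> 1" "d' \<ge> 1" using p q pd qd by auto
    moreover have "x @ [c] @ replicate (d-1) 0 = x' @ [c'] @ replicate (d'-1) 0" using eq pd qd by simp
    ultimately have "d - 1 = d' - 1 \<and> c = c' \<and> x = x'" using rep_inj by blast
    then show "p = q" using pd qd \<open>d \<ge> 1\<close> \<open>d' \<ge> 1\<close> by auto
  qed
  have img: "?g ` ?T \<subseteq> ?Av m"
  proof
    fix w assume "w \<in> ?g ` ?T"
    then obtain d c x where d: "d \<in> {1..t}" and c: "c \<in> {1..<k}" and x: "x \<in> ?Av (m-d)"
      and w: "w = x @ [c] @ replicate (d-1) 0" by auto
    have l1: "length w = m" using d x w assms unfolding words_def by auto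
    have l2: "set w \<subseteq> {..<k}" using c x w d unfolding words_def by auto
    have c0: "c \<noteq> 0" using c by auto
    have dt: "d - 1 < t" using d by auto
    have "\<not> sublist ?Z x" using x by auto
    then have "\<not> sublist ?Z w" using nosub[OF c0 assms(1) dt] w by simp
    then show "w \<in> ?Av m" using l1 l2 unfolding words_def by auto
  qed
  have "(\<Sum>d\<in>{1..t}. (k-1) * A k (m-d) ?Z) = (\<Sum>d\<in>{1..t}. card ({1..<k} \<times> ?Av (m-d)))"
    unfolding A_def card_cartesian_product by simp
  also have "\<dots> = card ?T" by (rule card_SigmaI[symmetric]) (auto intro: finAv)
  also have "\<dots> = card (?g ` ?T)" using card_image[OF inj] by simp
  also have "\<dots> \<le> card (?Av m)" using img finAv by (intro card_mono) auto
  also have "\<dots> = A k m ?Z" unfolding A_def by simp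
  finally show ?thesis .
qed

lemma avoid_le:
  assumes "length u = t" "t \<ge> 1" "set u \<subseteq> {..<k}"
  shows "A k m u \<le> A k m (replicate t 0)"
proof (induction m rule: less_induct)
  case (less m)
  show ?case
  proof (cases "m < t")
    case True
    have "\<And>v w. length v = t \<Longrightarrow> length w = m \<Longrightarrow> \<not> sublist v w"
      using True sublist_length_le by fastforce
    then have "{w \<in> words k m. \<not> sublist u w} = {w \<in> words k m. \<not> sublist (replicate t 0) w}"
      using assms(1) unfolding words_def by auto
    then show ?thesis unfolding A_def by simp
  next
    case False
    then have tm: "t \<le> m" by simp
    have "A k m u \<le> (\<Sum>d\<in>{1..t}. (k-1) * A k (m-d) u)" using L1[OF assms tm] .
    also have "\<dots> \<le> (\<Sum>d\<in>{1..t}. (k-1) * A k (m-d) (replicate t 0))"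
    proof (rule sum_mono)
      fix d assume "d \<in> {1..t}"
      then have "m - d < m" using tm by auto
      then show "(k-1) * A k (m-d) u \<le> (k-1) * A k (m-d) (replicate t 0)" using less by simp
    qed
    also have "\<dots> \<le> A k m (replicate t 0)" using L2[OF assms(2) tm] .
    finally show ?thesis .
  qed
qed

lemma closed_shape:
  assumes "closed_by w u" "length u = t" "length w = n" "n \<ge> 2 * t"
  shows "w = u @ take (n - 2*t) (drop t w) @ u"
proof -
  have pre: "prefix u w" and suf: "suffix u w" using assms(1) unfolding closed_by_def is_border_def by auto
  obtain r where r: "w = u @ r" using pre unfolding prefix_def by blast
  obtain s where s: "w = s @ u" using suf unfolding suffix_def by blast
  have lr: "length r = n - t" using r assms by auto
  have "drop (n - t) w = u" using s assms by simp
  then have "drop (n - 2*t) r = u" using r assms by (simp add: mult_2)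
  moreover have "take (n - 2*t) (drop t w) = take (n - 2*t) r" using r assms by simp
  ultimately show ?thesis using r by (metis append_take_drop_id)
qed

lemma closed_nosub:
  assumes "closed_by (u @ z @ u) u" "u \<noteq> []"
  shows "\<not> sublist u z"
proof
  assume "sublist u z"
  then obtain p q where z: "z = p @ u @ q" unfolding sublist_def by blast
  let ?w = "u @ z @ u"
  let ?S = "{i. i + length u \<le> length ?w \<and> take (length u) (drop i ?w) = u}"
  have "0 \<in> ?S" by simp
  moreover have "length u + length p \<in> ?S" using z by simp
  moreover have "length u + length z \<in> ?S" by simp
  ultimately have sub: "{0, length u + length p, length u + length z} \<subseteq> ?S" by blast
  have fin: "finite ?S" by (rule finite_subset[of _ "{..length ?w}"]) auto
  have "length u > 0" using assms(2) by simp
  have "length p < length z" using z \<open>length u > 0\<close> by simp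
  then have "card {0, length u + length p, length u + length z} = 3"
    using \<open>length u > 0\<close> by simp
  then have "3 \<le> card ?S" using card_mono[OF fin sub] by simp
  moreover have "card ?S = 2" using assms(1) unfolding closed_by_def occ_def by simp
  ultimately show False by simp
qed

theorem lemma7:
  fixes n t k :: nat
  assumes "n \<ge> 2 * t" and "2 * t \<ge> 2" and "k \<ge> 2"
  shows "C k n t \<le> k ^ t * A k (n - 2 * t) (replicate t 0)"
proof -
  let ?m = "n - 2 * t"
  let ?CL = "{w \<in> words k n. \<exists>u. length u = t \<and> closed_by w u}"
  let ?f = "\<lambda>w. (take t w, take ?m (drop t w))"
  let ?Av = "\<lambda>u. {w \<in> words k ?m. \<not> sublist u w}"
  have t1: "t \<ge> 1" using assms(2) by simp
  have shape: "\<And>w. w \<in> ?CL \<Longrightarrow> w = fst (?f w) @ snd (?f w) @ fst (?f w)"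
  proof -
    fix w assume "w \<in> ?CL"
    then obtain u where w: "w \<in> words k n" "length u = t" "closed_by w u" by blast
    have ln: "length w = n" using w unfolding words_def by simp
    have e: "w = u @ take ?m (drop t w) @ u" using closed_shape[OF w(3) w(2) ln assms(1)] .
    then have "take t w = u" using w(2) by (metis append_eq_conv_conj)
    then show "w = fst (?f w) @ snd (?f w) @ fst (?f w)" using e by simp
  qed
  have inj: "inj_on ?f ?CL"
  proof (rule inj_onI)
    fix w w' assume "w \<in> ?CL" "w' \<in> ?CL" "?f w = ?f w'"
    then show "w = w'" using shape[of w] shape[of w'] by metis
  qed
  have img: "?f ` ?CL \<subseteq> Sigma (words k t) ?Av"
  proof
    fix y assume "y \<in> ?f ` ?CL"
    then obtain w where wc: "w \<in> ?CL" and y: "y = ?f w" by blast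
    then obtain u where w: "w \<in> words k n" "length u = t" "closed_by w u" by blast
    have ln: "length w = n" and sw: "set w \<subseteq> {..<k}" using w unfolding words_def by auto
    have e: "w = u @ take ?m (drop t w) @ u" using closed_shape[OF w(3) w(2) ln assms(1)] .
    have tu: "take t w = u" using e w(2) by (metis append_eq_conv_conj)
    have "u \<noteq> []" using w(2) t1 by auto
    have ns: "\<not> sublist u (take ?m (drop t w))" using closed_nosub[of u "take ?m (drop t w)"] w(3) e \<open>u \<noteq> []\<close> by simp
    have "take t w \<in> words k t" using sw ln assms(1) unfolding words_def
      by (auto dest: in_set_takeD)
    moreover have "take ?m (drop t w) \<in> words k ?m" using sw ln assms(1) unfolding words_def
      by (auto dest!: in_set_takeD in_set_dropD)
    ultimately show "y \<in> Sigma (words k t) ?Av" using y tu ns by simp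
  qed
  have finAv: "\<And>u. finite (?Av u)" using finite_words by auto
  have "C k n t = card ?CL" unfolding C_def by simp
  also have "\<dots> = card (?f ` ?CL)" using card_image[OF inj] by simp
  also have "\<dots> \<le> card (Sigma (words k t) ?Av)"
    using img by (intro card_mono) (auto intro: finite_SigmaI finite_words finAv)
  also have "\<dots> = (\<Sum>u\<in>words k t. A k ?m u)" unfolding A_def
    by (rule card_SigmaI) (auto intro: finite_words finAv)
  also have "\<dots> \<le> (\<Sum>u\<in>words k t. A k ?m (replicate t 0))"
  proof (rule sum_mono)
    fix u assume "u \<in> words k t"
    then show "A k ?m u \<le> A k ?m (replicate t 0)"
      using avoid_le[of u t k ?m] t1 unfolding words_def by auto
  qed
  also have "\<dots> = k ^ t * A k ?m (replicate t 0)" using card_words by simp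
  finally show ?thesis .
qed

end
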